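(* Define $\psi:\mathcal{B}_n\to\mathcal{B}_n$ by $\psi(\pi)=\widetilde{\pi}$, where for $i\in[n]$, $\widetilde{\pi}_i=\pi_{n+1-i}-n-1$ if $\pi_{n+1-i}>0$ and $\widetilde{\pi}_i=\pi_{n+1-i}+n+1$ if $\pi_{n+1-i}<0$. Then $\psi$ is a bijection on $\mathcal{B}_n$, and for every $\pi\in\mathcal{B}_n$, $\mathrm{des}_B(\psi(\pi))=n-\mathrm{des}_B(\pi)$.
   Context: $\mathcal{B}_n$ is the group of signed permutations of $[n]$, i.e. bijections $\pi$ of $\{\pm1,\dots,\pm n\}$ with $\pi(-i)=-\pi(i)$, written $\pi=\pi_1\cdots\pi_n$ with $\pi_i=\pi(i)$, integers ordered naturally. Set $\pi_0=0$; $\mathrm{Des}_B(\pi)=\{i\in\{0,1,\dots,n-1\}:\pi_i>\pi_{i+1}\}$ and $\mathrm{des}_B(\pi)=|\mathrm{Des}_B(\pi)|$. *)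

theory Defs
  imports Main
begin

definition signed_set :: "nat \<Rightarrow> int set" where
  "signed_set n = {i. 1 \<le> \<bar>i\<bar> \<and> \<bar>i\<bar> \<le> int n}"

text \<open>Signed permutations B_n: bijections pi of {+-1,...,+-n} with pi(-i) = -pi(i),
  represented as functions on int that are the identity outside {+-1,...,+-n}
  (in particular pi 0 = 0, matching the convention pi_0 = 0).\<close>
definition signed_perms :: "nat \<Rightarrow> (int \<Rightarrow> int) set" where
  "signed_perms n = {\<pi>. bij_betw \<pi> (signed_set n) (signed_set n)
      \<and> (\<forall>i \<in> signed_set n. \<pi> (- i) = - \<pi> i)
      \<and> (\<forall>i. i \<notin> signed_set n \<longrightarrow> \<pi> i = i)}"

definition desB :: "nat \<Rightarrow> (int \<Rightarrow> int) \<Rightarrow> nat" where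
  "desB n \<pi> = card {i \<in> {0..<n}. (if i = 0 then 0 else \<pi> (int i)) > \<pi> (int (i + 1))}"

definition psi_pos :: "nat \<Rightarrow> (int \<Rightarrow> int) \<Rightarrow> int \<Rightarrow> int" where
  "psi_pos n \<pi> i = (let v = \<pi> (int n + 1 - i) in if v > 0 then v - int n - 1 else v + int n + 1)"

definition psi :: "nat \<Rightarrow> (int \<Rightarrow> int) \<Rightarrow> (int \<Rightarrow> int)" where
  "psi n \<pi> = (\<lambda>i. if 1 \<le> i \<and> i \<le> int n then psi_pos n \<pi> i
                 else if 1 \<le> - i \<and> - i \<le> int n then - psi_pos n \<pi> (- i)
                 else i)"

end

theory Submission
  imports Defs
begin

definition gv :: "nat \<Rightarrow> int \<Rightarrow> int" where
  "gv n v = (if v > 0 then v - int n - 1 else v + int n + 1)"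

definition rv :: "nat \<Rightarrow> int \<Rightarrow> int" where
  "rv n x = (if x > 0 then int n + 1 - x else - (int n + 1) - x)"

lemma mem_S: "x \<in> signed_set n \<longleftrightarrow> 1 \<le> \<bar>x\<bar> \<and> \<bar>x\<bar> \<le> int n"
  by (simp add: signed_set_def)

lemma gv_S: "v \<in> signed_set n \<Longrightarrow> gv n v \<in> signed_set n"
  by (auto simp: mem_S gv_def)

lemma gv_gv: "v \<in> signed_set n \<Longrightarrow> gv n (gv n v) = v"
  by (auto simp: mem_S gv_def)

lemma rv_S: "v \<in> signed_set n \<Longrightarrow> rv n v \<in> signed_set n"
  by (auto simp: mem_S rv_def)

lemma rv_rv: "v \<in> signed_set n \<Longrightarrow> rv n (rv n v) = v"
  by (auto simp: mem_S rv_def)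

lemma gv_neg: "v \<in> signed_set n \<Longrightarrow> gv n (- v) = - gv n v"
  by (auto simp: mem_S gv_def)

lemma sp_S: "\<pi> \<in> signed_perms n \<Longrightarrow> x \<in> signed_set n \<Longrightarrow> \<pi> x \<in> signed_set n"
  unfolding signed_perms_def using bij_betwE by blast

lemma sp_odd: "\<pi> \<in> signed_perms n \<Longrightarrow> x \<in> signed_set n \<Longrightarrow> \<pi> (- x) = - \<pi> x"
  unfolding signed_perms_def by blast

lemma sp_out: "\<pi> \<in> signed_perms n \<Longrightarrow> x \<notin> signed_set n \<Longrightarrow> \<pi> x = x"
  unfolding signed_perms_def by blast

lemma sp_inj: "\<pi> \<in> signed_perms n \<Longrightarrow> x \<in> signed_set n \<Longrightarrow> y \<in> signed_set n
   \<Longrightarrow> \<pi> x = \<pi> y \<Longrightarrow> x = y"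
  unfolding signed_perms_def bij_betw_def inj_on_def by blast

lemma psi_out: "x \<notin> signed_set n \<Longrightarrow> psi n \<pi> x = x"
  by (auto simp: psi_def mem_S)

lemma psi_in: "\<pi> \<in> signed_perms n \<Longrightarrow> x \<in> signed_set n \<Longrightarrow> psi n \<pi> x = gv n (\<pi> (rv n x))"
proof -
  assume p: "\<pi> \<in> signed_perms n" and x: "x \<in> signed_set n"
  show ?thesis
  proof (cases "x > 0")
    case True
    then show ?thesis using x by (auto simp: psi_def psi_pos_def mem_S gv_def rv_def Let_def)
  next
    case False
    have r: "rv n x = - (int n + 1 + x)" using False x by (auto simp: rv_def mem_S)
    have m: "int n + 1 + x \<in> signed_set n" using False x by (auto simp: mem_S)
    have "psi n \<pi> x = - gv n (\<pi> (int n + 1 + x))"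
      using False x by (auto simp: psi_def psi_pos_def mem_S gv_def Let_def)
    also have "\<dots> = gv n (- \<pi> (int n + 1 + x))"
      using gv_neg[OF sp_S[OF p m]] by simp
    also have "\<dots> = gv n (\<pi> (rv n x))" using sp_odd[OF p m] r by simp
    finally show ?thesis .
  qed
qed

lemma psi_sp: assumes p: "\<pi> \<in> signed_perms n" shows "psi n \<pi> \<in> signed_perms n"
proof -
  have b1: "bij_betw (rv n) (signed_set n) (signed_set n)"
    by (rule bij_betw_byWitness[where f'="rv n"]) (auto simp: rv_S rv_rv)
  have b2: "bij_betw (gv n) (signed_set n) (signed_set n)"
    by (rule bij_betw_byWitness[where f'="gv n"]) (auto simp: gv_S gv_gv)
  have b3: "bij_betw \<pi> (signed_set n) (signed_set n)" using p unfolding signed_perms_def by blast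
  have "bij_betw (gv n \<circ> \<pi> \<circ> rv n) (signed_set n) (signed_set n)"
    using b1 b2 b3 bij_betw_trans by blast
  then have bij: "bij_betw (psi n \<pi>) (signed_set n) (signed_set n)"
    by (rule bij_betw_cong[THEN iffD1, rotated]) (simp add: psi_in[OF p])
  have odd: "\<forall>i \<in> signed_set n. psi n \<pi> (- i) = - psi n \<pi> i"
    by (auto simp: psi_def mem_S)
  show ?thesis unfolding signed_perms_def using bij odd psi_out by blast
qed

lemma psi_psi: assumes p: "\<pi> \<in> signed_perms n" shows "psi n (psi n \<pi>) = \<pi>"
proof
  fix x
  show "psi n (psi n \<pi>) x = \<pi> x"
  proof (cases "x \<in> signed_set n")
    case True
    then show ?thesis
      using psi_in[OF psi_sp[OF p] True] psi_in[OF p rv_S[OF True]]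
        rv_rv[OF True] gv_gv[OF sp_S[OF p True]] by simp
  next
    case False
    then show ?thesis using psi_out sp_out[OF p] by simp
  qed
qed

lemma card_filter_int: "finite A \<Longrightarrow> int (card {x \<in> A. P x}) = (\<Sum>x\<in>A. (of_bool (P x) :: int))"
proof -
  assume f: "finite A"
  have "int (card {x \<in> A. P x}) = (\<Sum>x\<in>{x \<in> A. P x}. (1::int))" by simp
  also have "\<dots> = (\<Sum>x\<in>A. if P x then 1 else 0)" by (rule sum.inter_filter[OF f])
  also have "\<dots> = (\<Sum>x\<in>A. (of_bool (P x) :: int))" by (rule sum.cong) auto
  finally show ?thesis .
qed

lemma desB_sum: "int (desB n \<pi>) =
  (\<Sum>i\<in>{0..<n}. of_bool ((if i = 0 then 0 else \<pi> (int i)) > \<pi> (int (i + 1))))"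
  unfolding desB_def by (rule card_filter_int) simp

lemma term_id:
  assumes "1 \<le> \<bar>a\<bar>" "\<bar>a\<bar> \<le> int n" "1 \<le> \<bar>b\<bar>" "\<bar>b\<bar> \<le> int n" "a \<noteq> b"
  shows "(of_bool (a > b) :: int) + of_bool (gv n b > gv n a) = 1 + of_bool (a > 0) - of_bool (b > 0)"
  using assms by (auto simp: gv_def)

lemma split0: "0 < (n::nat) \<Longrightarrow> (\<Sum>i\<in>{0..<n}. (f i :: int)) = f 0 + (\<Sum>i\<in>{1..<n}. f i)"
proof -
  assume "0 < n"
  then have "{0..<n} = insert 0 {1..<n}" by auto
  then show ?thesis by simp
qed

lemma main_count:
  assumes p: "\<pi> \<in> signed_perms n"
  shows "int (desB n (psi n \<pi>)) + int (desB n \<pi>) = int n"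
proof (cases "n = 0")
  case True then show ?thesis by (simp add: desB_def)
next
  case False
  have n0: "0 < n" using False by simp
  let ?s = "\<lambda>j::nat. (of_bool (\<pi> (int j) > 0) :: int)"
  have inS: "\<And>j. 1 \<le> j \<Longrightarrow> j \<le> n \<Longrightarrow> int j \<in> signed_set n" by (auto simp: mem_S)
  have sig: "\<And>j. 1 \<le> j \<Longrightarrow> j \<le> n \<Longrightarrow> psi n \<pi> (int j) = gv n (\<pi> (int n + 1 - int j))"
    by (simp add: psi_def psi_pos_def gv_def Let_def)
  have A: "int (desB n \<pi>) = of_bool (0 > \<pi> 1) +
     (\<Sum>j\<in>{1..<n}. of_bool (\<pi> (int j) > \<pi> (int (j + 1))))"
    unfolding desB_sum split0[OF n0] by (intro arg_cong2[where f="(+)"] sum.cong) auto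
  have B0: "int (desB n (psi n \<pi>)) = of_bool (0 > psi n \<pi> 1) +
     (\<Sum>i\<in>{1..<n}. of_bool (psi n \<pi> (int i) > psi n \<pi> (int (i + 1))))"
    unfolding desB_sum split0[OF n0] by (intro arg_cong2[where f="(+)"] sum.cong) auto
  have B1: "(\<Sum>i\<in>{1..<n}. of_bool (psi n \<pi> (int i) > psi n \<pi> (int (i + 1))) :: int)
     = (\<Sum>j\<in>{1..<n}. of_bool (gv n (\<pi> (int (j+1))) > gv n (\<pi> (int j))))"
  proof -
    have "(\<Sum>i\<in>{1..<n}. of_bool (psi n \<pi> (int i) > psi n \<pi> (int (i + 1))) :: int)
      = (\<Sum>i\<in>{1..<n}. of_bool (psi n \<pi> (int (n + 1 - Suc i)) > psi n \<pi> (int (n + 1 - Suc i + 1))))"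
      by (subst sum.atLeastLessThan_rev) simp
    also have "\<dots> = (\<Sum>j\<in>{1..<n}. of_bool (gv n (\<pi> (int (j+1))) > gv n (\<pi> (int j))))"
    proof (rule sum.cong[OF refl])
      fix j assume j: "j \<in> {1..<n}"
      have e1: "psi n \<pi> (int (n + 1 - Suc j)) = gv n (\<pi> (int (j+1)))"
        using j sig[of "n - j"] by (simp add: of_nat_diff Suc_le_eq)
      have e2: "psi n \<pi> (int (n + 1 - Suc j + 1)) = gv n (\<pi> (int j))"
      proof -
        have h: "n + 1 - Suc j + 1 = n + 1 - j" using j by auto
        have "psi n \<pi> (int (n+1-j)) = gv n (\<pi> (int n + 1 - int (n+1-j)))"
          by (rule sig) (use j in auto)
        moreover have "int n + 1 - int (n+1-j) = int j" using j by auto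
        ultimately show ?thesis using h by simp
      qed
      show "(of_bool (psi n \<pi> (int (n + 1 - Suc j)) > psi n \<pi> (int (n + 1 - Suc j + 1))) :: int)
          = of_bool (gv n (\<pi> (int (j+1))) > gv n (\<pi> (int j)))" using e1 e2 by simp
    qed
    finally show ?thesis .
  qed
  have C: "(\<Sum>j\<in>{1..<n}. of_bool (\<pi> (int j) > \<pi> (int (j + 1))) :: int)
      + (\<Sum>j\<in>{1..<n}. of_bool (gv n (\<pi> (int (j+1))) > gv n (\<pi> (int j))))
      = (\<Sum>j\<in>{1..<n}. 1 + (?s j - ?s (Suc j)))"
    unfolding sum.distrib[symmetric]
  proof (rule sum.cong[OF refl])
    fix j assume j: "j \<in> {1..<n}"
    have a: "\<pi> (int j) \<in> signed_set n" using j sp_S[OF p inS] by auto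
    have b: "\<pi> (int (j+1)) \<in> signed_set n" using j sp_S[OF p inS[of "j+1"]] by auto
    have ne: "\<pi> (int j) \<noteq> \<pi> (int (j+1))"
      using sp_inj[OF p inS inS, of j "j+1"] j by auto
    show "(of_bool (\<pi> (int j) > \<pi> (int (j + 1))) :: int)
      + of_bool (gv n (\<pi> (int (j+1))) > gv n (\<pi> (int j))) = 1 + (?s j - ?s (Suc j))"
      using term_id[of "\<pi> (int j)" n "\<pi> (int (j+1))"] a b ne by (simp add: mem_S)
  qed
  have T: "(\<Sum>j\<in>{1..<n}. 1 + (?s j - ?s (Suc j))) = int (n - 1) + ?s 1 - ?s n"
  proof -
    have "(\<Sum>j\<in>{1..<n}. ?s j - ?s (Suc j)) = - (\<Sum>j\<in>{1..<n}. ?s (Suc j) - ?s j)"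
      by (simp add: sum_negf[symmetric])
    also have "\<dots> = ?s 1 - ?s n" using False by (subst sum_Suc_diff') auto
    finally show ?thesis by (simp add: sum.distrib)
  qed
  have p1: "\<pi> 1 \<in> signed_set n" using sp_S[OF p inS[of 1]] False by simp
  have pn: "\<pi> (int n) \<in> signed_set n" using sp_S[OF p inS[of n]] False by simp
  have s1: "psi n \<pi> 1 = gv n (\<pi> (int n))" using sig[of 1] False by simp
  have D1: "(of_bool (0 > psi n \<pi> 1) :: int) = ?s n" using s1 pn by (auto simp: gv_def mem_S)
  have D2: "(of_bool (0 > \<pi> 1) :: int) = 1 - ?s 1" using p1 by (auto simp: mem_S)
  show ?thesis using A B0 B1 C T D1 D2 False by simp
qed

theorem lemma2p1:
  fixes n :: nat
  shows "bij_betw (psi n) (signed_perms n) (signed_perms n)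
    \<and> (\<forall>\<pi> \<in> signed_perms n. desB n (psi n \<pi>) = n - desB n \<pi>)"
proof
  show "bij_betw (psi n) (signed_perms n) (signed_perms n)"
    by (rule bij_betw_byWitness[where f'="psi n"]) (auto simp: psi_psi psi_sp)
  show "\<forall>\<pi> \<in> signed_perms n. desB n (psi n \<pi>) = n - desB n \<pi>"
    using main_count by (metis add_diff_cancel_right' of_nat_add of_nat_eq_iff)
qed

end
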